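(* Let $\mathcal{X}$ and $\mathcal{Y}$ be finite sets, let $n\ge1$ and $k\ge0$ be integers, and let $P_{\mathbf{y}|\mathbf{x}}$ be a channel from $\mathcal{X}^n$ to $\mathcal{Y}^n$. Let $P_{\mathbf{x}}$ be an arbitrary probability distribution on $\mathcal{X}^n$, let $s>0$ and $\lambda\in\mathbb{R}$. Let $(\mathbf{x},\mathbf{y},\bar{\mathbf{x}})$ be jointly distributed as $P_{\mathbf{x}}(\mathbf{x})P_{\mathbf{y}|\mathbf{x}}(\mathbf{y}|\mathbf{x})P_{\mathbf{x}}(\bar{\mathbf{x}})$. Define the generalized information density $$\imath_s(\mathbf{x},\mathbf{y})=\log_2\frac{P_{\mathbf{y}|\mathbf{x}}(\mathbf{y}|\mathbf{x})^s}{\mathbb{E}_{\bar{\mathbf{x}}}\big[P_{\mathbf{y}|\mathbf{x}}(\mathbf{y}|\bar{\mathbf{x}})^s\big]},$$ for each $\mathbf{y}$ the threshold $\tilde\lambda_{\mathbf{y}}=\big(2^{n\lambda}\,\mathbb{E}_{\bar{\mathbf{x}}}[P_{\mathbf{y}|\mathbf{x}}(\mathbf{y}|\bar{\mathbf{x}})^s]\big)^{1/s}$, and $$\widetilde{\mathrm{RCU}}_\lambda(k,n)=\mathbb{E}\Big[\min\Big\{1,(2^k-1)\Pr\big[P_{\mathbf{y}|\mathbf{x}}(\mathbf{y}|\bar{\mathbf{x}})\ge P_{\mathbf{y}|\mathbf{x}}(\mathbf{y}|\mathbf{x})\,\big|\,\mathbf{x},\mathbf{y}\big]\Big\}\,\mathbb{1}\{\imath_s(\mathbf{x},\mathbf{y})\ge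 n\lambda\}\Big],$$ $$\tilde\psi(\mathbf{y},\mathbf{x})=\Pr\Big[P_{\mathbf{y}|\mathbf{x}}(\mathbf{y}|\bar{\mathbf{x}})\ge\max\{P_{\mathbf{y}|\mathbf{x}}(\mathbf{y}|\mathbf{x}),\tilde\lambda_{\mathbf{y}}\}\,\Big|\,\mathbf{x},\mathbf{y}\Big].$$ Then there exists an $(n,k,\epsilon_{\mathsf T},\epsilon_{\mathsf U})$-code for $P_{\mathbf{y}|\mathbf{x}}$ satisfying simultaneously $$\epsilon_{\mathsf T}\le\widetilde{\mathrm{RCU}}_\lambda(k,n)+\Pr[\imath_s(\mathbf{x},\mathbf{y})<n\lambda]\qquad\text{and}\qquad \epsilon_{\mathsf U}\le\mathbb{E}\big[\min\{1,(2^k-1)\,\tilde\psi(\mathbf{y},\mathbf{x})\}\big].$$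
   Context: A channel from $\mathcal{X}^n$ to $\mathcal{Y}^n$ is a conditional probability mass function $P_{\mathbf{y}|\mathbf{x}}(\mathbf{y}|\mathbf{x})$, $\mathbf{x}\in\mathcal{X}^n$, $\mathbf{y}\in\mathcal{Y}^n$. (The paper notes the same statement applies to continuous alphabets with conditional densities in place of pmfs.) $\mathbb{1}\{\cdot\}$ is the indicator function; $\mathbb{E}_{\bar{\mathbf{x}}}$ denotes expectation over $\bar{\mathbf{x}}\sim P_{\mathbf{x}}$ with $\mathbf{y}$ fixed. Definition ($(n,k,\epsilon_{\mathsf T},\epsilon_{\mathsf U})$-code). An $(n,k,\epsilon_{\mathsf T},\epsilon_{\mathsf U})$-code for the channel $P_{\mathbf{y}|\mathbf{x}}$ consists of: (i) a discrete random variable $u$ with distribution $P_u$ on a set $\mathcal{U}$ with $|\mathcal{U}|\le 2$, known to both transmitter and receiver (common randomness); (ii) an encoder $\phi:\mathcal{U}\times\{1,\dots,2^k\}\to\mathcal{X}^n$; (iii) an erasure decoder $g:\mathcal{U}\times\mathcal{Y}^n\to\{0,1,\dots,2^k\}$, where output $0$ denotes an erasure. For each $u$ and $\hat w\in\{0,1,\dots,2^k\}$ let $\mathcal{D}_{u,\hat w}=\{\mathbf{y}: g(u,\mathbf{y})=\hat w\}$ (these partition $\mathcal{Y}^n$). The message $w$ is uniform on $\{1,\dots,2^k\}$ and independent of $u$, and given $u$ and $w=m$ the output $\mathbf{y}$ has law $P_{\mathbf{y}|\mathbf{x}}(\cdot\,|\,\phi(u,m))$. It is required that the total error probability and undetected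 error probability satisfy $$\frac{1}{2^k}\sum_{m=1}^{2^k}\sum_{\substack{m'=0\\ m'\ne m}}^{2^k}\Pr[\mathbf{y}\in\mathcal{D}_{u,m'}\mid w=m]\le\epsilon_{\mathsf T},\qquad \frac{1}{2^k}\sum_{m=1}^{2^k}\sum_{\substack{m'=1\\ m'\ne m}}^{2^k}\Pr[\mathbf{y}\in\mathcal{D}_{u,m'}\mid w=m]\le\epsilon_{\mathsf U},$$ where probabilities are over the pair $(u,\mathbf{y})$. *)

theory Defs
  imports Complex_Main
begin

definition seqs :: "nat \<Rightarrow> 'a list set" where
  "seqs n = {xs. length xs = n}"

definition is_channel :: "nat \<Rightarrow> ('a list \<Rightarrow> 'b list \<Rightarrow> real) \<Rightarrow> bool" where
  "is_channel n W \<longleftrightarrow>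
     (\<forall>x\<in>seqs n. \<forall>y\<in>seqs n. 0 \<le> W x y) \<and>
     (\<forall>x\<in>seqs n. (\<Sum>y\<in>seqs n. W x y) = 1)"

definition is_input_dist :: "nat \<Rightarrow> ('a list \<Rightarrow> real) \<Rightarrow> bool" where
  "is_input_dist n P \<longleftrightarrow> (\<forall>x\<in>seqs n. 0 \<le> P x) \<and> (\<Sum>x\<in>seqs n. P x) = 1"

text \<open>(n,k,eT,eU)-code with common randomness u on U = bool (so |U| \<le> 2),
  distribution Pu, encoder enc, erasure decoder dec (output 0 = erasure).\<close>
definition is_code ::
  "nat \<Rightarrow> nat \<Rightarrow> real \<Rightarrow> real \<Rightarrow> ('a list \<Rightarrow> 'b list \<Rightarrow> real) \<Rightarrow>
   (bool \<Rightarrow> real) \<Rightarrow> (bool \<Rightarrow> nat \<Rightarrow> 'a list) \<Rightarrow> (bool \<Rightarrow> 'b list \<Rightarrow> nat) \<Rightarrow> bool" where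
  "is_code n k eT eU W Pu enc dec \<longleftrightarrow>
     (\<forall>u. 0 \<le> Pu u) \<and> (\<Sum>u\<in>UNIV. Pu u) = 1 \<and>
     (\<forall>u. \<forall>m\<in>{1..2^k}. enc u m \<in> seqs n) \<and>
     (\<forall>u. \<forall>y\<in>seqs n. dec u y \<in> {0..2^k}) \<and>
     (1 / 2^k) * (\<Sum>m\<in>{1..2^k}. \<Sum>m'\<in>{0..2^k} - {m}.
        \<Sum>u\<in>UNIV. Pu u * (\<Sum>y\<in>{y\<in>seqs n. dec u y = m'}. W (enc u m) y)) \<le> eT \<and>
     (1 / 2^k) * (\<Sum>m\<in>{1..2^k}. \<Sum>m'\<in>{1..2^k} - {m}.
        \<Sum>u\<in>UNIV. Pu u * (\<Sum>y\<in>{y\<in>seqs n. dec u y = m'}. W (enc u m) y)) \<le> eU"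

definition avg_pow :: "nat \<Rightarrow> ('a list \<Rightarrow> real) \<Rightarrow> ('a list \<Rightarrow> 'b list \<Rightarrow> real) \<Rightarrow> real \<Rightarrow> 'b list \<Rightarrow> real" where
  "avg_pow n P W s y = (\<Sum>xb\<in>seqs n. P xb * W xb y powr s)"

definition info_dens :: "nat \<Rightarrow> ('a list \<Rightarrow> real) \<Rightarrow> ('a list \<Rightarrow> 'b list \<Rightarrow> real) \<Rightarrow> real \<Rightarrow> 'a list \<Rightarrow> 'b list \<Rightarrow> real" where
  "info_dens n P W s x y = log 2 (W x y powr s / avg_pow n P W s y)"

definition lam_tilde :: "nat \<Rightarrow> ('a list \<Rightarrow> real) \<Rightarrow> ('a list \<Rightarrow> 'b list \<Rightarrow> real) \<Rightarrow> real \<Rightarrow> real \<Rightarrow> 'b list \<Rightarrow> real" where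
  "lam_tilde n P W s lam y = (2 powr (real n * lam) * avg_pow n P W s y) powr (1 / s)"

definition RCU_tilde :: "nat \<Rightarrow> nat \<Rightarrow> ('a list \<Rightarrow> real) \<Rightarrow> ('a list \<Rightarrow> 'b list \<Rightarrow> real) \<Rightarrow> real \<Rightarrow> real \<Rightarrow> real" where
  "RCU_tilde n k P W s lam =
     (\<Sum>x\<in>seqs n. \<Sum>y\<in>seqs n. P x * W x y *
        (min 1 ((2^k - 1) * (\<Sum>xb\<in>seqs n. P xb * (if W xb y \<ge> W x y then 1 else 0)))
         * (if info_dens n P W s x y \<ge> real n * lam then 1 else 0)))"

definition psi_tilde :: "nat \<Rightarrow> ('a list \<Rightarrow> real) \<Rightarrow> ('a list \<Rightarrow> 'b list \<Rightarrow> real) \<Rightarrow> real \<Rightarrow> real \<Rightarrow> 'b list \<Rightarrow> 'a list \<Rightarrow> real" where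
  "psi_tilde n P W s lam y x =
     (\<Sum>xb\<in>seqs n. P xb *
        (if W xb y \<ge> max (W x y) (lam_tilde n P W s lam y) then 1 else 0))"

end

theory Submission
  imports Defs "HOL-Library.FuncSet"
begin

lemma sum_PiE_insert:
  assumes "finite A" "finite I" "m \<notin> I"
  shows "(\<Sum>c\<in>PiE (insert m I) (\<lambda>_. A). f c) = (\<Sum>x\<in>A. \<Sum>c\<in>PiE I (\<lambda>_. A). f (c(m:=x)))"
proof -
  have "(\<Sum>c\<in>PiE (insert m I) (\<lambda>_. A). f c) = (\<Sum>p\<in>A \<times> PiE I (\<lambda>_. A). f ((\<lambda>(y, g). g(m := y)) p))"
    unfolding PiE_insert_eq using inj_combinator[OF assms(3), of "\<lambda>_. A"]
    by (subst sum.reindex) auto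
  also have "\<dots> = (\<Sum>x\<in>A. \<Sum>c\<in>PiE I (\<lambda>_. A). f (c(m:=x)))"
    by (simp add: sum.cartesian_product split_def)
  finally show ?thesis .
qed

lemma weight_sum:
  fixes P :: "'x \<Rightarrow> real"
  assumes "finite A" "finite I" "sum P A = 1"
  shows "(\<Sum>c\<in>PiE I (\<lambda>_. A). \<Prod>i\<in>I. P (c i)) = 1"
  using prod_sum_PiE[of I "\<lambda>_. A" "\<lambda>_. P", symmetric] assms by simp

lemma weight_insert:
  assumes "m \<notin> I" "finite I"
  shows "(\<Prod>i\<in>insert m I. P ((c(m:=x)) i)) = P x * (\<Prod>i\<in>I. P (c i))"
proof -
  have "(\<Prod>i\<in>I. P ((c(m:=x)) i)) = (\<Prod>i\<in>I. P (c i))"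
    using assms by (intro prod.cong) auto
  then show ?thesis using assms by (simp add: prod.insert)
qed

lemma marginal:
  fixes P :: "'x \<Rightarrow> real"
  assumes "finite A" "finite I" "sum P A = 1" "j \<in> I"
  shows "(\<Sum>c\<in>PiE I (\<lambda>_. A). (\<Prod>i\<in>I. P (c i)) * g (c j)) = (\<Sum>x\<in>A. P x * g x)"
proof -
  obtain J where I: "I = insert j J" "j \<notin> J" "finite J" using assms
    by (metis Diff_iff finite_Diff insert_Diff singletonI)
  have "(\<Sum>c\<in>PiE I (\<lambda>_. A). (\<Prod>i\<in>I. P (c i)) * g (c j))
     = (\<Sum>x\<in>A. \<Sum>c\<in>PiE J (\<lambda>_. A). (\<Prod>i\<in>insert j J. P ((c(j:=x)) i)) * g x)"
    unfolding I(1) using I assms by (subst sum_PiE_insert) auto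
  also have "\<dots> = (\<Sum>x\<in>A. P x * g x * (\<Sum>c\<in>PiE J (\<lambda>_. A). (\<Prod>i\<in>J. P (c i))))"
    using I by (simp only: weight_insert[OF I(2,3)]) (simp add: sum_distrib_left mult_ac)
  also have "\<dots> = (\<Sum>x\<in>A. P x * g x)"
    using weight_sum[of A J P] assms I by simp
  finally show ?thesis .
qed


lemma sum_pos_witness:
  fixes q h :: "'c \<Rightarrow> real"
  assumes "finite S" "\<And>c. c \<in> S \<Longrightarrow> q c \<ge> 0" "\<And>c. c \<in> S \<Longrightarrow> q c > 0 \<Longrightarrow> h c \<ge> 0"
    "c0 \<in> S" "q c0 > 0" "h c0 > 0"
  shows "(\<Sum>c\<in>S. q c * h c) > 0"
proof -
  have "(\<Sum>c\<in>S. q c * h c) \<ge> (\<Sum>c\<in>{c0}. q c * h c)"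
    using assms by (intro sum_mono2) (auto, metis less_eq_real_def mult_eq_0_iff mult_nonneg_nonneg)
  moreover have "q c0 * h c0 > 0" using assms by simp
  ultimately show ?thesis by simp
qed

lemma aux_theta:
  fixes a b d e :: real
  assumes "a - b \<noteq> 0"
  shows "(a/(a-b))*d + (1 - a/(a-b))*e = (a*d - b*e)/(a-b)"
proof -
  have "1 - a/(a-b) = -b/(a-b)" using assms by (simp add: field_simps)
  then show ?thesis by (simp add: add_divide_distrib diff_divide_distrib times_divide_eq_left)
qed

lemma two_point:
  fixes q f g :: "'c \<Rightarrow> real"
  assumes fin: "finite S" and qnn: "\<And>c. c \<in> S \<Longrightarrow> q c \<ge> 0" and q1: "sum q S = 1"
    and fA: "(\<Sum>c\<in>S. q c * f c) \<le> A" and gB: "(\<Sum>c\<in>S. q c * g c) \<le> B"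
  shows "\<exists>c1\<in>S. \<exists>c2\<in>S. \<exists>\<theta>. 0 \<le> \<theta> \<and> \<theta> \<le> 1 \<and>
           \<theta> * f c1 + (1-\<theta>) * f c2 \<le> A \<and> \<theta> * g c1 + (1-\<theta>) * g c2 \<le> B"
proof (cases "\<exists>c\<in>S. f c \<le> A \<and> g c \<le> B")
  case True
  then obtain c where "c \<in> S" "f c \<le> A" "g c \<le> B" by blast
  then show ?thesis by (intro bexI[of _ c] exI[of _ 1]) auto
next
  case False
  define f' where "f' c = f c - A" for c
  define g' where "g' c = g c - B" for c
  have sf: "(\<Sum>c\<in>S. q c * f' c) \<le> 0"
    using fA q1 by (simp add: f'_def right_diff_distrib sum_subtractf sum_distrib_right[symmetric])
  have sg: "(\<Sum>c\<in>S. q c * g' c) \<le> 0"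
    using gB q1 by (simp add: g'_def right_diff_distrib sum_subtractf sum_distrib_right[symmetric])
  have nq: "\<forall>c\<in>S. f' c > 0 \<or> g' c > 0" using False by (auto simp: f'_def g'_def)
  have qpos: "\<exists>c0\<in>S. q c0 > 0"
  proof (rule ccontr)
    assume "\<not> ?thesis"
    then have "\<forall>c\<in>S. q c = 0" using qnn by (force simp: not_less)
    then have "sum q S = 0" by simp
    with q1 show False by simp
  qed
  define L where "L = {c\<in>S. q c > 0 \<and> f' c \<le> 0}"
  define G where "G = {c\<in>S. q c > 0 \<and> g' c \<le> 0}"
  have Lne: "L \<noteq> {}"
  proof
    assume "L = {}"
    then have "\<forall>c\<in>S. q c > 0 \<longrightarrow> f' c > 0" by (auto simp: L_def)
    moreover obtain c0 where "c0 \<in> S" "q c0 > 0" using qpos by blast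
    ultimately have "(\<Sum>c\<in>S. q c * f' c) > 0"
      using fin qnn by (intro sum_pos_witness[of S q f' c0]) auto
    with sf show False by simp
  qed
  have Gne: "G \<noteq> {}"
  proof
    assume "G = {}"
    then have "\<forall>c\<in>S. q c > 0 \<longrightarrow> g' c > 0" by (auto simp: G_def)
    moreover obtain c0 where "c0 \<in> S" "q c0 > 0" using qpos by blast
    ultimately have "(\<Sum>c\<in>S. q c * g' c) > 0"
      using fin qnn by (intro sum_pos_witness[of S q g' c0]) auto
    with sg show False by simp
  qed
  have Lg: "g' c > 0" if "c \<in> L" for c using that nq by (auto simp: L_def)
  have Gf: "f' c > 0" if "c \<in> G" for c using that nq by (auto simp: G_def)
  show ?thesis
  proof (cases "\<exists>c1\<in>L. \<exists>c2\<in>G. f' c2 * g' c1 \<le> f' c1 * g' c2")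
    case True
    then obtain c1 c2 where c: "c1 \<in> L" "c2 \<in> G" "f' c2 * g' c1 \<le> f' c1 * g' c2" by blast
    have f1: "f' c1 \<le> 0" using c by (auto simp: L_def)
    have f2: "f' c2 > 0" using Gf c by auto
    define \<theta> where "\<theta> = f' c2 / (f' c2 - f' c1)"
    have den: "f' c2 - f' c1 > 0" using f1 f2 by simp
    have t0: "0 \<le> \<theta>" "\<theta> \<le> 1" using f1 f2 den by (auto simp: \<theta>_def field_simps)
    have e1: "\<theta> * f' c1 + (1-\<theta>) * f' c2 = 0"
      using den unfolding \<theta>_def by (subst aux_theta) auto
    have e2: "\<theta> * g' c1 + (1-\<theta>) * g' c2 = (f' c2 * g' c1 - f' c1 * g' c2) / (f' c2 - f' c1)"
      using den unfolding \<theta>_def by (subst aux_theta) auto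
    have e2': "\<theta> * g' c1 + (1-\<theta>) * g' c2 \<le> 0"
      unfolding e2 using c(3) den by (intro divide_nonpos_pos) auto
    show ?thesis
      using c t0 e1 e2' unfolding L_def G_def f'_def g'_def
      by (intro bexI[of _ c1] bexI[of _ c2] exI[of _ \<theta>]) (auto simp: algebra_simps)
  next
    case False
    have finL: "finite L" using fin by (auto simp: L_def)
    define \<alpha> where "\<alpha> = Max ((\<lambda>c. - f' c / g' c) ` L)"
    have amax: "- f' c / g' c \<le> \<alpha>" if "c \<in> L" for c
      using finL that unfolding \<alpha>_def by (intro Max_ge) auto
    obtain cs where cs: "cs \<in> L" "\<alpha> = - f' cs / g' cs"
      using finL Lne unfolding \<alpha>_def by (metis (no_types, lifting) Max_in finite_imageI image_iff image_is_empty)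
    have gcs: "g' cs > 0" using Lg cs by auto
    have h: "f' c + \<alpha> * g' c \<ge> 0" if "c \<in> S" "q c > 0" for c
    proof (cases "c \<in> L")
      case True
      have "- f' c / g' c \<le> \<alpha>" using amax True by auto
      then have "- f' c \<le> \<alpha> * g' c" using Lg[OF True] by (simp add: field_simps)
      then show ?thesis by simp
    next
      case nL: False
      then have fp: "f' c > 0" using that by (auto simp: L_def)
      show ?thesis
      proof (cases "g' c \<ge> 0")
        case True
        have "\<alpha> \<ge> 0" using cs Lg[OF cs(1)] by (auto simp: L_def divide_nonpos_pos)
        then show ?thesis using fp True by (simp add: add_pos_nonneg)
      next
        case gneg: False
        then have "c \<in> G" using that by (auto simp: G_def)
        then have "f' c * g' cs > f' cs * g' c" using False cs(1) by (auto simp: not_le)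
        then have "f' c > (f' cs / g' cs) * g' c" using gcs by (simp add: field_simps)
        then show ?thesis using cs(2) by simp
      qed
    qed
    obtain c0 where c0: "c0 \<in> G" using Gne by blast
    have "f' c0 + \<alpha> * g' c0 > 0"
    proof -
      have "f' c0 * g' cs > f' cs * g' c0" using False cs(1) c0 by (auto simp: not_le)
      then have "f' c0 > (f' cs / g' cs) * g' c0" using gcs by (simp add: field_simps)
      then show ?thesis using cs(2) by simp
    qed
    then have "(\<Sum>c\<in>S. q c * (f' c + \<alpha> * g' c)) > 0"
      using c0 fin qnn h by (intro sum_pos_witness[of S q _ c0]) (auto simp: G_def)
    moreover have "(\<Sum>c\<in>S. q c * (f' c + \<alpha> * g' c)) = (\<Sum>c\<in>S. q c * f' c) + \<alpha> * (\<Sum>c\<in>S. q c * g' c)"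
      by (simp add: algebra_simps sum.distrib sum_distrib_left)
    moreover have "\<alpha> \<ge> 0" using cs Lg[OF cs(1)] by (auto simp: L_def divide_nonpos_pos)
    ultimately have "0 < (\<Sum>c\<in>S. q c * f' c) + \<alpha> * (\<Sum>c\<in>S. q c * g' c)" by simp
    moreover have "\<alpha> * (\<Sum>c\<in>S. q c * g' c) \<le> 0" using \<open>\<alpha> \<ge> 0\<close> sg by (simp add: mult_nonneg_nonpos)
    ultimately show ?thesis using sf by simp
  qed
qed

definition decg :: "nat \<Rightarrow> (nat \<Rightarrow> real) \<Rightarrow> (nat \<Rightarrow> bool) \<Rightarrow> nat" where
  "decg M w D = (let mh = (SOME m. m \<in> {1..M} \<and> (\<forall>m'\<in>{1..M}. w m' \<le> w m)) in if D mh then mh else 0)"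

lemma ml_exists:
  fixes M :: nat and w :: "nat \<Rightarrow> real"
  assumes "M \<ge> 1"
  shows "\<exists>m. m \<in> {1..M} \<and> (\<forall>m'\<in>{1..M}. w m' \<le> w m)"
proof -
  have "1 \<in> {1..M}" using assms by simp
  then have ne: "w ` {1..M} \<noteq> {}" by blast
  have "Max (w ` {1..M}) \<in> w ` {1..M}" using ne by (intro Max_in) auto
  then obtain m where m: "m \<in> {1..M}" "w m = Max (w ` {1..M})" by auto
  have "\<forall>m'\<in>{1..M}. w m' \<le> w m" using m by auto
  with m show ?thesis by blast
qed

lemma decg_cases:
  assumes "M \<ge> 1"
  shows "decg M w D = 0 \<or> (decg M w D \<in> {1..M} \<and> (\<forall>m'\<in>{1..M}. w m' \<le> w (decg M w D)) \<and> D (decg M w D))"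
proof -
  define mh where "mh = (SOME m. m \<in> {1..M} \<and> (\<forall>m'\<in>{1..M}. w m' \<le> w m))"
  have "mh \<in> {1..M} \<and> (\<forall>m'\<in>{1..M}. w m' \<le> w mh)"
    unfolding mh_def using ml_exists[OF assms, of w] by (rule someI_ex)
  then show ?thesis unfolding decg_def mh_def[symmetric] Let_def by auto
qed

lemma decg_range: "M \<ge> 1 \<Longrightarrow> decg M w D \<in> {0..M}"
  using decg_cases[of M w D] by auto

lemma decg_correct:
  assumes "M \<ge> 1" "m \<in> {1..M}" "D m" "\<forall>m'\<in>{1..M}-{m}. w m' < w m"
  shows "decg M w D = m"
proof -
  define mh where "mh = (SOME m. m \<in> {1..M} \<and> (\<forall>m'\<in>{1..M}. w m' \<le> w m))"
  have mh: "mh \<in> {1..M} \<and> (\<forall>m'\<in>{1..M}. w m' \<le> w mh)"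
    unfolding mh_def using ml_exists[OF assms(1), of w] by (rule someI_ex)
  have "mh = m"
  proof (rule ccontr)
    assume "mh \<noteq> m"
    then have "w mh < w m" using assms(4) mh by auto
    moreover have "w m \<le> w mh" using mh assms(2) by auto
    ultimately show False by simp
  qed
  then show ?thesis unfolding decg_def mh_def[symmetric] Let_def using assms(3) by simp
qed

lemma decg_tot:
  assumes M: "M \<ge> 1" and m: "m \<in> {1..M}" and w0: "w m \<ge> 0" and D: "D m \<longleftrightarrow> (Ib \<and> w m > 0)"
  shows "w m * (if decg M w D \<in> {0..M} - {m} then 1 else 0)
     \<le> w m * (if \<not> Ib then 1 else 0) + w m * (if Ib then 1 else 0) *
        min 1 (\<Sum>j\<in>{1..M}-{m}. if w j \<ge> w m then 1 else 0)"
proof (cases "w m = 0")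
  case True then show ?thesis by simp
next
  case False
  then have wp: "w m > 0" using w0 by simp
  show ?thesis
  proof (cases Ib)
    case False then show ?thesis using w0 by simp
  next
    case Ib: True
    show ?thesis
    proof (cases "\<exists>j\<in>{1..M}-{m}. w j \<ge> w m")
      case True
      then obtain j where j: "j \<in> {1..M}-{m}" "w j \<ge> w m" by blast
      have "(\<Sum>j\<in>{1..M}-{m}. if w j \<ge> w m then 1 else 0) \<ge> (\<Sum>j\<in>{j}. if w j \<ge> w m then 1 else (0::real))"
        using j by (intro sum_mono2) auto
      then have "min 1 (\<Sum>j\<in>{1..M}-{m}. if w j \<ge> w m then 1 else (0::real)) = 1" using j by simp
      then show ?thesis using Ib w0 by simp
    next
      case False
      then have "decg M w D = m" using M m D Ib wp by (intro decg_correct) (auto simp: not_le)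
      then show ?thesis using w0 by (simp add: sum_nonneg)
    qed
  qed
qed

lemma decg_und:
  assumes M: "M \<ge> 1" and m: "m \<in> {1..M}" and D: "\<And>j. D j \<Longrightarrow> w j \<ge> lt"
  shows "(if decg M w D \<in> {1..M} - {m} then 1 else 0)
     \<le> min 1 (\<Sum>j\<in>{1..M}-{m}. if w j \<ge> max (w m) lt then 1 else (0::real))"
proof (cases "decg M w D \<in> {1..M} - {m}")
  case False then show ?thesis by (simp only: if_not_P[OF False]) (simp add: sum_nonneg)
next
  case True
  define d where "d = decg M w D"
  have d: "d \<in> {1..M}-{m}" "w m \<le> w d" "D d" using True decg_cases[OF M, of w D] m unfolding d_def[symmetric] by auto
  then have dd: "w d \<ge> max (w m) lt" using D by auto
  have "(\<Sum>j\<in>{1..M}-{m}. if w j \<ge> max (w m) lt then 1 else 0) \<ge> (\<Sum>j\<in>{d}. if w j \<ge> max (w m) lt then 1 else (0::real))"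
    using d by (intro sum_mono2) auto
  then have "min 1 (\<Sum>j\<in>{1..M}-{m}. if w j \<ge> max (w m) lt then 1 else (0::real)) = 1" using dd by simp
  then show ?thesis using True by simp
qed

lemma avg_bound:
  fixes P Z :: "'x \<Rightarrow> real" and h :: "('i \<Rightarrow> 'x) \<Rightarrow> real"
  assumes A: "finite A" and J: "finite J" and P1: "sum P A = 1" and Pnn: "\<forall>x\<in>A. P x \<ge> 0" and b: "b \<ge> 0"
   and hb: "\<And>c. c \<in> PiE J (\<lambda>_. A) \<Longrightarrow> h c \<le> a + b * min 1 (\<Sum>j\<in>J. Z (c j))"
  shows "(\<Sum>c\<in>PiE J (\<lambda>_. A). (\<Prod>i\<in>J. P (c i)) * h c) \<le> a + b * min 1 (real (card J) * (\<Sum>x\<in>A. P x * Z x))"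
proof -
  define q where "q c = (\<Prod>i\<in>J. P (c i))" for c :: "'i \<Rightarrow> 'x"
  have qnn: "q c \<ge> 0" if "c \<in> PiE J (\<lambda>_. A)" for c
    unfolding q_def using that Pnn by (intro prod_nonneg) (auto simp: PiE_def Pi_def)
  have q1: "(\<Sum>c\<in>PiE J (\<lambda>_. A). q c) = 1" unfolding q_def using weight_sum[OF A J P1] .
  have finPi: "finite (PiE J (\<lambda>_. A))" using A J by (simp add: finite_PiE)
  have "(\<Sum>c\<in>PiE J (\<lambda>_. A). q c * h c) \<le> (\<Sum>c\<in>PiE J (\<lambda>_. A). q c * (a + b * min 1 (\<Sum>j\<in>J. Z (c j))))"
    using qnn hb by (intro sum_mono mult_left_mono) auto
  also have "\<dots> = a + b * (\<Sum>c\<in>PiE J (\<lambda>_. A). q c * min 1 (\<Sum>j\<in>J. Z (c j)))"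
    using q1 by (simp add: algebra_simps sum.distrib sum_distrib_left[symmetric] sum_distrib_right[symmetric])
  also have "(\<Sum>c\<in>PiE J (\<lambda>_. A). q c * min 1 (\<Sum>j\<in>J. Z (c j))) \<le> min 1 (real (card J) * (\<Sum>x\<in>A. P x * Z x))"
  proof -
    have "(\<Sum>c\<in>PiE J (\<lambda>_. A). q c * min 1 (\<Sum>j\<in>J. Z (c j))) \<le> (\<Sum>c\<in>PiE J (\<lambda>_. A). q c * 1)"
      using qnn by (intro sum_mono mult_left_mono) auto
    then have 1: "(\<Sum>c\<in>PiE J (\<lambda>_. A). q c * min 1 (\<Sum>j\<in>J. Z (c j))) \<le> 1" using q1 by simp
    have "(\<Sum>c\<in>PiE J (\<lambda>_. A). q c * min 1 (\<Sum>j\<in>J. Z (c j))) \<le> (\<Sum>c\<in>PiE J (\<lambda>_. A). q c * (\<Sum>j\<in>J. Z (c j)))"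
      using qnn by (intro sum_mono mult_left_mono) auto
    also have "\<dots> = (\<Sum>j\<in>J. \<Sum>c\<in>PiE J (\<lambda>_. A). q c * Z (c j))"
      by (simp add: sum_distrib_left) (rule sum.swap)
    also have "\<dots> = (\<Sum>j\<in>J. \<Sum>x\<in>A. P x * Z x)"
      unfolding q_def using marginal[OF A J P1] by (intro sum.cong) auto
    also have "\<dots> = real (card J) * (\<Sum>x\<in>A. P x * Z x)" by simp
    finally show ?thesis using 1 by simp
  qed
  then have "b * (\<Sum>c\<in>PiE J (\<lambda>_. A). q c * min 1 (\<Sum>j\<in>J. Z (c j))) \<le> b * min 1 (real (card J) * (\<Sum>x\<in>A. P x * Z x))"
    using b by (rule mult_left_mono)
  finally show ?thesis unfolding q_def by simp
qed

lemma finite_seqs: "finite (seqs n :: ('a::finite) list set)"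
proof -
  have "seqs n = {xs :: 'a list. set xs \<subseteq> UNIV \<and> length xs = n}" by (simp add: seqs_def)
  then show ?thesis using finite_lists_length_eq[of "UNIV :: 'a set" n] by simp
qed

definition Dc :: "nat \<Rightarrow> ('a list \<Rightarrow> real) \<Rightarrow> ('a list \<Rightarrow> 'b list \<Rightarrow> real) \<Rightarrow> real \<Rightarrow> real \<Rightarrow> 'a list \<Rightarrow> 'b list \<Rightarrow> bool" where
  "Dc n P W s lam x y \<longleftrightarrow> info_dens n P W s x y \<ge> real n * lam \<and> W x y > 0"

lemma Dc_lam:
  assumes P: "is_input_dist n P" and s: "s > 0" and D: "Dc n P W s lam x y"
  shows "W x y \<ge> lam_tilde n P W s lam y"
proof -
  have Wp: "W x y > 0" using D by (simp add: Dc_def)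
  have avg0: "avg_pow n P W s y \<ge> 0"
    unfolding avg_pow_def using P by (intro sum_nonneg) (auto simp: is_input_dist_def)
  show ?thesis
  proof (cases "avg_pow n P W s y = 0")
    case True then show ?thesis using Wp by (simp add: lam_tilde_def)
  next
    case False
    then have ap: "avg_pow n P W s y > 0" using avg0 by simp
    have r: "W x y powr s / avg_pow n P W s y > 0" using Wp ap by simp
    have "real n * lam \<le> log 2 (W x y powr s / avg_pow n P W s y)"
      using D by (simp add: Dc_def info_dens_def)
    then have "2 powr (real n * lam) \<le> W x y powr s / avg_pow n P W s y"
      using r by (simp add: le_log_iff)
    then have "2 powr (real n * lam) * avg_pow n P W s y \<le> W x y powr s"
      using ap by (simp add: le_divide_eq)
    then have "(2 powr (real n * lam) * avg_pow n P W s y) powr (1/s) \<le> (W x y powr s) powr (1/s)"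
      using ap s by (intro powr_mono2) auto
    also have "\<dots> = W x y" using s Wp by (simp add: powr_powr)
    finally show ?thesis by (simp add: lam_tilde_def)
  qed
qed


definition decW where
  "decW n P W s lam M c y = decg M (\<lambda>j. W (c j) y) (\<lambda>j. Dc n P W s lam (c j) y)"

lemma decompose:
  fixes P :: "'x \<Rightarrow> real" and M m :: nat
  assumes A: "finite A" and M: "m \<in> {1..M}"
  shows "(\<Sum>c\<in>PiE {1..M} (\<lambda>_. A). (\<Prod>i\<in>{1..M}. P (c i)) * F c)
     = (\<Sum>x\<in>A. P x * (\<Sum>c\<in>PiE ({1..M}-{m}) (\<lambda>_. A). (\<Prod>i\<in>{1..M}-{m}. P (c i)) * F (c(m:=x))))"
proof -
  have I: "{1..M} = insert m ({1..M}-{m})" using M by auto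
  have nm: "m \<notin> {1..M}-{m}" and fin: "finite ({1..M}-{m})" by auto
  have "(\<Sum>c\<in>PiE {1..M} (\<lambda>_. A). (\<Prod>i\<in>{1..M}. P (c i)) * F c)
     = (\<Sum>c\<in>PiE (insert m ({1..M}-{m})) (\<lambda>_. A). (\<Prod>i\<in>insert m ({1..M}-{m}). P (c i)) * F c)"
    using I by simp
  also have "\<dots> = (\<Sum>x\<in>A. \<Sum>c\<in>PiE ({1..M}-{m}) (\<lambda>_. A). (\<Prod>i\<in>insert m ({1..M}-{m}). P ((c(m:=x)) i)) * F (c(m:=x)))"
    using A by (subst sum_PiE_insert) auto
  also have "\<dots> = (\<Sum>x\<in>A. P x * (\<Sum>c\<in>PiE ({1..M}-{m}) (\<lambda>_. A). (\<Prod>i\<in>{1..M}-{m}. P (c i)) * F (c(m:=x))))"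
    by (simp only: weight_insert[OF nm fin]) (simp add: sum_distrib_left mult_ac)
  finally show ?thesis .
qed

lemma KT:
  fixes W :: "('a::finite) list \<Rightarrow> ('b::finite) list \<Rightarrow> real"
  assumes ch: "is_channel n W" and P: "is_input_dist n P" and M: "M \<ge> 1" and m: "m \<in> {1..M}"
    and y: "y \<in> seqs n"
  shows "(\<Sum>c\<in>PiE {1..M} (\<lambda>_. seqs n). (\<Prod>i\<in>{1..M}. P (c i)) *
            (W (c m) y * (if decW n P W s lam M c y \<in> {0..M}-{m} then 1 else 0)))
     \<le> (\<Sum>x\<in>seqs n. P x * (W x y * (if info_dens n P W s x y < real n * lam then 1 else 0)
          + W x y * (if info_dens n P W s x y \<ge> real n * lam then 1 else 0) *
            min 1 (real (M-1) * (\<Sum>xb\<in>seqs n. P xb * (if W xb y \<ge> W x y then 1 else 0)))))"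
proof -
  have A: "finite (seqs n :: 'a list set)" by (rule finite_seqs)
  have P1: "sum P (seqs n) = 1" and Pnn: "\<forall>x\<in>seqs n. P x \<ge> 0" using P by (auto simp: is_input_dist_def)
  have cardJ: "card ({1..M}-{m}) = M - 1" using m by simp
  show ?thesis
  proof (subst decompose[OF A m], intro sum_mono mult_left_mono)
    fix x :: "'a list" assume x: "x \<in> seqs n"
    show "P x \<ge> 0" using Pnn x by auto
    have W0: "W x y \<ge> 0" using ch x y by (auto simp: is_channel_def)
    define Ib where "Ib = (info_dens n P W s x y \<ge> real n * lam)"
    have "(\<Sum>c\<in>PiE ({1..M}-{m}) (\<lambda>_. seqs n). (\<Prod>i\<in>{1..M}-{m}. P (c i)) *
            (W ((c(m:=x)) m) y * (if decW n P W s lam M (c(m:=x)) y \<in> {0..M}-{m} then 1 else 0)))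
       \<le> W x y * (if \<not> Ib then 1 else 0) + W x y * (if Ib then 1 else 0) *
            min 1 (real (card ({1..M}-{m})) * (\<Sum>xb\<in>seqs n. P xb * (if W xb y \<ge> W x y then 1 else 0)))"
    proof (rule avg_bound[OF A _ P1 Pnn])
      show "finite ({1..M}-{m})" by simp
      show "W x y * (if Ib then 1 else 0) \<ge> 0" using W0 by simp
      fix c :: "nat \<Rightarrow> 'a list" assume c: "c \<in> PiE ({1..M}-{m}) (\<lambda>_. seqs n)"
      define w where "w = (\<lambda>j. W ((c(m:=x)) j) y)"
      have e1: "decW n P W s lam M (c(m:=x)) y = decg M w (\<lambda>j. Dc n P W s lam ((c(m:=x)) j) y)"
        by (simp only: decW_def w_def)
      have e2: "W ((c(m:=x)) m) y = W x y" by simp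
      have wm: "w m = W x y" by (simp add: w_def)
      have wj: "(\<Sum>j\<in>{1..M}-{m}. if w j \<ge> w m then 1 else (0::real)) = (\<Sum>j\<in>{1..M}-{m}. if W (c j) y \<ge> W x y then 1 else 0)"
        unfolding wm by (intro sum.cong) (auto simp: w_def)
      have r: "w m * (if decg M w (\<lambda>j. Dc n P W s lam ((c(m:=x)) j) y) \<in> {0..M} - {m} then 1 else 0)
         \<le> w m * (if \<not> Ib then 1 else 0) + w m * (if Ib then 1 else 0) *
            min 1 (\<Sum>j\<in>{1..M}-{m}. if w j \<ge> w m then 1 else 0)"
        by (rule decg_tot[OF M m]) (auto simp: wm W0 Dc_def Ib_def)
      from r[unfolded wj, unfolded wm] show "W ((c(m:=x)) m) y * (if decW n P W s lam M (c(m:=x)) y \<in> {0..M}-{m} then 1 else 0)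
         \<le> W x y * (if \<not> Ib then 1 else 0) + W x y * (if Ib then 1 else 0) *
            min 1 (\<Sum>j\<in>{1..M}-{m}. if W (c j) y \<ge> W x y then 1 else 0)"
        unfolding e1 e2 .
    qed
    then show "(\<Sum>c\<in>PiE ({1..M}-{m}) (\<lambda>_. seqs n). (\<Prod>i\<in>{1..M}-{m}. P (c i)) *
            (W ((c(m:=x)) m) y * (if decW n P W s lam M (c(m:=x)) y \<in> {0..M}-{m} then 1 else 0)))
       \<le> W x y * (if info_dens n P W s x y < real n * lam then 1 else 0)
          + W x y * (if info_dens n P W s x y \<ge> real n * lam then 1 else 0) *
            min 1 (real (M-1) * (\<Sum>xb\<in>seqs n. P xb * (if W xb y \<ge> W x y then 1 else 0)))"
      unfolding cardJ Ib_def by (simp add: not_le)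
  qed
qed

lemma KU:
  fixes W :: "('a::finite) list \<Rightarrow> ('b::finite) list \<Rightarrow> real"
  assumes ch: "is_channel n W" and P: "is_input_dist n P" and M: "M \<ge> 1" and m: "m \<in> {1..M}"
    and y: "y \<in> seqs n" and s: "s > 0"
  shows "(\<Sum>c\<in>PiE {1..M} (\<lambda>_. seqs n). (\<Prod>i\<in>{1..M}. P (c i)) *
            (W (c m) y * (if decW n P W s lam M c y \<in> {1..M}-{m} then 1 else 0)))
     \<le> (\<Sum>x\<in>seqs n. P x * (W x y * min 1 (real (M-1) * psi_tilde n P W s lam y x)))"
proof -
  have A: "finite (seqs n :: 'a list set)" by (rule finite_seqs)
  have P1: "sum P (seqs n) = 1" and Pnn: "\<forall>x\<in>seqs n. P x \<ge> 0" using P by (auto simp: is_input_dist_def)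
  have cardJ: "card ({1..M}-{m}) = M - 1" using m by simp
  define lt where "lt = lam_tilde n P W s lam y"
  show ?thesis
  proof (subst decompose[OF A m], intro sum_mono mult_left_mono)
    fix x :: "'a list" assume x: "x \<in> seqs n"
    show "P x \<ge> 0" using Pnn x by auto
    have W0: "W x y \<ge> 0" using ch x y by (auto simp: is_channel_def)
    have "(\<Sum>c\<in>PiE ({1..M}-{m}) (\<lambda>_. seqs n). (\<Prod>i\<in>{1..M}-{m}. P (c i)) *
            (W ((c(m:=x)) m) y * (if decW n P W s lam M (c(m:=x)) y \<in> {1..M}-{m} then 1 else 0)))
       \<le> 0 + W x y *
            min 1 (real (card ({1..M}-{m})) * (\<Sum>xb\<in>seqs n. P xb * (if W xb y \<ge> max (W x y) lt then 1 else 0)))"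
    proof (rule avg_bound[OF A _ P1 Pnn])
      show "finite ({1..M}-{m})" by simp
      show "W x y \<ge> 0" using W0 by simp
      fix c :: "nat \<Rightarrow> 'a list" assume c: "c \<in> PiE ({1..M}-{m}) (\<lambda>_. seqs n)"
      define w where "w = (\<lambda>j. W ((c(m:=x)) j) y)"
      have e1: "decW n P W s lam M (c(m:=x)) y = decg M w (\<lambda>j. Dc n P W s lam ((c(m:=x)) j) y)"
        by (simp only: decW_def w_def)
      have e2: "W ((c(m:=x)) m) y = W x y" by simp
      have wm: "w m = W x y" by (simp add: w_def)
      have wj: "(\<Sum>j\<in>{1..M}-{m}. if w j \<ge> max (w m) lt then 1 else (0::real)) = (\<Sum>j\<in>{1..M}-{m}. if W (c j) y \<ge> max (W x y) lt then 1 else 0)"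
        unfolding wm by (intro sum.cong) (auto simp: w_def)
      have r: "(if decg M w (\<lambda>j. Dc n P W s lam ((c(m:=x)) j) y) \<in> {1..M} - {m} then 1 else 0)
         \<le> min 1 (\<Sum>j\<in>{1..M}-{m}. if w j \<ge> max (w m) lt then 1 else (0::real))"
        by (rule decg_und[OF M m]) (auto simp: w_def lt_def intro: Dc_lam[OF P s])
      from mult_left_mono[OF r[unfolded wj] W0]
      show "W ((c(m:=x)) m) y * (if decW n P W s lam M (c(m:=x)) y \<in> {1..M}-{m} then 1 else 0)
         \<le> 0 + W x y * min 1 (\<Sum>j\<in>{1..M}-{m}. if W (c j) y \<ge> max (W x y) lt then 1 else 0)"
        unfolding e1 e2 by simp
    qed
    then show "(\<Sum>c\<in>PiE ({1..M}-{m}) (\<lambda>_. seqs n). (\<Prod>i\<in>{1..M}-{m}. P (c i)) *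
            (W ((c(m:=x)) m) y * (if decW n P W s lam M (c(m:=x)) y \<in> {1..M}-{m} then 1 else 0)))
       \<le> W x y * min 1 (real (M-1) * psi_tilde n P W s lam y x)"
      unfolding cardJ psi_tilde_def lt_def by simp
  qed
qed


lemma regroup:
  fixes Pu :: "'u \<Rightarrow> real" and f :: "'u \<Rightarrow> nat \<Rightarrow> 'y \<Rightarrow> real"
  assumes Y: "finite Y" and B: "\<And>m. finite (B m)" and U: "finite U"
  shows "(\<Sum>m\<in>I. \<Sum>m'\<in>B m. \<Sum>u\<in>U. Pu u * (\<Sum>y\<in>{y\<in>Y. d u y = m'}. f u m y))
       = (\<Sum>u\<in>U. Pu u * (\<Sum>m\<in>I. \<Sum>y\<in>Y. f u m y * (if d u y \<in> B m then 1 else 0)))"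
proof -
  have step: "(\<Sum>m'\<in>B m. \<Sum>u\<in>U. Pu u * (\<Sum>y\<in>{y\<in>Y. d u y = m'}. f u m y))
      = (\<Sum>u\<in>U. Pu u * (\<Sum>y\<in>Y. f u m y * (if d u y \<in> B m then 1 else 0)))" for m
  proof -
    have "(\<Sum>m'\<in>B m. \<Sum>u\<in>U. Pu u * (\<Sum>y\<in>{y\<in>Y. d u y = m'}. f u m y))
       = (\<Sum>m'\<in>B m. \<Sum>u\<in>U. Pu u * (\<Sum>y\<in>Y. if d u y = m' then f u m y else 0))"
      using Y by (simp add: sum.inter_filter)
    also have "\<dots> = (\<Sum>u\<in>U. Pu u * (\<Sum>y\<in>Y. \<Sum>m'\<in>B m. if d u y = m' then f u m y else 0))"
      by (subst sum.swap) (simp add: sum_distrib_left[symmetric] sum.swap[of _ "B m" Y])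
    also have "\<dots> = (\<Sum>u\<in>U. Pu u * (\<Sum>y\<in>Y. f u m y * (if d u y \<in> B m then 1 else 0)))"
      using B by (simp add: sum.delta if_distrib cong: if_cong)
    finally show ?thesis .
  qed
  show ?thesis
    by (simp only: step) (simp add: sum_distrib_left sum.swap[of _ I U])
qed


lemma real_pow_minus1: "real ((2::nat)^k - 1) = 2^k - 1"
  by (simp add: of_nat_diff)

lemma swap_avg:
  fixes q :: "'c \<Rightarrow> real" and F :: "'c \<Rightarrow> nat \<Rightarrow> 'y \<Rightarrow> real"
  shows "(\<Sum>c\<in>S. q c * ((1/K) * (\<Sum>m\<in>I. \<Sum>y\<in>Y. F c m y)))
       = (1/K) * (\<Sum>m\<in>I. \<Sum>y\<in>Y. \<Sum>c\<in>S. q c * F c m y)"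
  by (simp add: sum_distrib_left mult_ac sum.swap[of _ S I] sum.swap[of _ S Y])

theorem theorem2:
  fixes W :: "('a::finite) list \<Rightarrow> ('b::finite) list \<Rightarrow> real"
    and P :: "'a list \<Rightarrow> real"
    and n k :: nat and s lam :: real
  assumes "n \<ge> 1"
    and "is_channel n W"
    and "is_input_dist n P"
    and "s > 0"
  shows "\<exists>eT eU Pu enc dec. is_code n k eT eU W Pu enc dec \<and>
     eT \<le> RCU_tilde n k P W s lam +
           (\<Sum>x\<in>seqs n. \<Sum>y\<in>seqs n. P x * W x y *
              (if info_dens n P W s x y < real n * lam then 1 else 0)) \<and>
     eU \<le> (\<Sum>x\<in>seqs n. \<Sum>y\<in>seqs n. P x * W x y *
              min 1 ((2^k - 1) * psi_tilde n P W s lam y x))"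
proof -
  note ch = assms(2) and P = assms(3) and s = assms(4)
  define M where "M = (2::nat)^k"
  have M1: "M \<ge> 1" by (simp add: M_def)
  have RM: "real M = 2^k" by (simp add: M_def)
  have RM1: "real (M - 1) = 2^k - 1" by (simp add: M_def of_nat_diff)
  have A: "finite (seqs n :: 'a list set)" by (rule finite_seqs)
  have Y: "finite (seqs n :: 'b list set)" by (rule finite_seqs)
  have P1: "sum P (seqs n) = 1" and Pnn: "\<forall>x\<in>seqs n. P x \<ge> 0" using P by (auto simp: is_input_dist_def)
  define S where "S = PiE {1..M} (\<lambda>_. seqs n :: 'a list set)"
  define q where "q c = (\<Prod>i\<in>{1..M}. P (c i))" for c :: "nat \<Rightarrow> 'a list"
  define dc where "dc c y = decW n P W s lam M c y" for c y
  define aT where "aT c = (1 / 2^k) * (\<Sum>m\<in>{1..M}. \<Sum>y\<in>seqs n. W (c m) y * (if dc c y \<in> {0..M}-{m} then 1 else 0))" for c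
  define aU where "aU c = (1 / 2^k) * (\<Sum>m\<in>{1..M}. \<Sum>y\<in>seqs n. W (c m) y * (if dc c y \<in> {1..M}-{m} then 1 else 0))" for c
  define BT where "BT = RCU_tilde n k P W s lam +
           (\<Sum>x\<in>seqs n. \<Sum>y\<in>seqs n. P x * W x y *
              (if info_dens n P W s x y < real n * lam then 1 else 0))"
  define BU where "BU = (\<Sum>x\<in>seqs n. \<Sum>y\<in>seqs n. P x * W x y *
              min 1 ((2^k - 1) * psi_tilde n P W s lam y x))"
  have finS: "finite S" unfolding S_def using A by (simp add: finite_PiE)
  have qnn: "q c \<ge> 0" if "c \<in> S" for c
    unfolding q_def using that Pnn by (intro prod_nonneg) (auto simp: S_def PiE_def Pi_def)
  have q1: "sum q S = 1" unfolding q_def S_def using weight_sum[OF A _ P1, of "{1..M}"] by simp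
  have avgT: "(\<Sum>c\<in>S. q c * aT c) \<le> BT"
  proof -
    define G where "G x y = P x * (W x y * (if info_dens n P W s x y < real n * lam then 1 else 0)
          + W x y * (if info_dens n P W s x y \<ge> real n * lam then 1 else 0) *
            min 1 (real (M-1) * (\<Sum>xb\<in>seqs n. P xb * (if W xb y \<ge> W x y then 1 else 0))))" for x y
    have "(\<Sum>c\<in>S. q c * aT c) = (1/2^k) * (\<Sum>m\<in>{1..M}. \<Sum>y\<in>seqs n. \<Sum>c\<in>S. q c *
             (W (c m) y * (if dc c y \<in> {0..M}-{m} then 1 else 0)))"
      unfolding aT_def by (rule swap_avg)
    also have "\<dots> \<le> (1/2^k) * (\<Sum>m\<in>{1..M}. \<Sum>y\<in>seqs n. \<Sum>x\<in>seqs n. G x y)"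
    proof -
      have "(\<Sum>c\<in>S. q c * (W (c m) y * (if dc c y \<in> {0..M}-{m} then 1 else 0))) \<le> (\<Sum>x\<in>seqs n. G x y)"
        if "m \<in> {1..M}" "y \<in> seqs n" for m y
        unfolding S_def q_def dc_def G_def using that by (rule KT[OF ch P M1])
      then show ?thesis by (intro mult_left_mono sum_mono) auto
    qed
    also have "\<dots> = (\<Sum>x\<in>seqs n. \<Sum>y\<in>seqs n. G x y)"
    proof -
      have "(\<Sum>y\<in>seqs n. \<Sum>x\<in>seqs n. G x y) = (\<Sum>x\<in>seqs n. \<Sum>y\<in>seqs n. G x y)" by (rule sum.swap)
      then show ?thesis using RM by simp
    qed
    also have "\<dots> = BT"
      unfolding BT_def RCU_tilde_def G_def RM1 sum.distrib[symmetric]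
      by (intro sum.cong refl) (simp add: algebra_simps)
    finally show ?thesis .
  qed
  have avgU: "(\<Sum>c\<in>S. q c * aU c) \<le> BU"
  proof -
    define G where "G x y = P x * (W x y * min 1 (real (M-1) * psi_tilde n P W s lam y x))" for x y
    have "(\<Sum>c\<in>S. q c * aU c) = (1/2^k) * (\<Sum>m\<in>{1..M}. \<Sum>y\<in>seqs n. \<Sum>c\<in>S. q c *
             (W (c m) y * (if dc c y \<in> {1..M}-{m} then 1 else 0)))"
      unfolding aU_def by (rule swap_avg)
    also have "\<dots> \<le> (1/2^k) * (\<Sum>m\<in>{1..M}. \<Sum>y\<in>seqs n. \<Sum>x\<in>seqs n. G x y)"
    proof -
      have "(\<Sum>c\<in>S. q c * (W (c m) y * (if dc c y \<in> {1..M}-{m} then 1 else 0))) \<le> (\<Sum>x\<in>seqs n. G x y)"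
        if "m \<in> {1..M}" "y \<in> seqs n" for m y
        unfolding S_def q_def dc_def G_def using that by (rule KU[OF ch P M1 _ _ s])
      then show ?thesis by (intro mult_left_mono sum_mono) auto
    qed
    also have "\<dots> = (\<Sum>x\<in>seqs n. \<Sum>y\<in>seqs n. G x y)"
    proof -
      have "(\<Sum>y\<in>seqs n. \<Sum>x\<in>seqs n. G x y) = (\<Sum>x\<in>seqs n. \<Sum>y\<in>seqs n. G x y)" by (rule sum.swap)
      then show ?thesis using RM by simp
    qed
    also have "\<dots> = BU"
      unfolding BU_def G_def RM1
      by (intro sum.cong refl) (simp add: algebra_simps)
    finally show ?thesis .
  qed
  obtain c1 c2 \<theta> where c12: "c1 \<in> S" "c2 \<in> S" "0 \<le> \<theta>" "\<theta> \<le> 1"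
    "\<theta> * aT c1 + (1-\<theta>) * aT c2 \<le> BT" "\<theta> * aU c1 + (1-\<theta>) * aU c2 \<le> BU"
    using two_point[OF finS qnn q1 avgT avgU] by blast
  define Pu where "Pu u = (if u then \<theta> else 1 - \<theta>)" for u :: bool
  define enc where "enc u = (if u then c1 else c2)" for u :: bool
  define dec where "dec u y = dc (enc u) y" for u y
  define eT where "eT = (1 / 2^k) * (\<Sum>m\<in>{1..2^k}. \<Sum>m'\<in>{0..2^k} - {m}.
        \<Sum>u\<in>UNIV. Pu u * (\<Sum>y\<in>{y\<in>seqs n. dec u y = m'}. W (enc u m) y))"
  define eU where "eU = (1 / 2^k) * (\<Sum>m\<in>{1..2^k}. \<Sum>m'\<in>{1..2^k} - {m}.
        \<Sum>u\<in>UNIV. Pu u * (\<Sum>y\<in>{y\<in>seqs n. dec u y = m'}. W (enc u m) y))"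
  have UNIVb: "(UNIV :: bool set) = {True, False}" by auto
  have eT_eq: "eT = \<theta> * aT c1 + (1-\<theta>) * aT c2"
    unfolding eT_def M_def[symmetric]
    by (subst regroup[OF Y]) (simp_all add: UNIVb Pu_def enc_def dec_def aT_def field_simps)
  have eU_eq: "eU = \<theta> * aU c1 + (1-\<theta>) * aU c2"
    unfolding eU_def M_def[symmetric]
    by (subst regroup[OF Y]) (simp_all add: UNIVb Pu_def enc_def dec_def aU_def field_simps)
  have code: "is_code n k eT eU W Pu enc dec"
    unfolding is_code_def
  proof (intro conjI allI ballI)
    fix u :: bool show "0 \<le> Pu u" using c12 by (simp add: Pu_def)
  next
    show "(\<Sum>u\<in>UNIV. Pu u) = 1" by (simp add: UNIVb Pu_def)
  next
    fix u :: bool and m assume "m \<in> {1..(2::nat)^k}"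
    then show "enc u m \<in> seqs n" using c12 unfolding enc_def S_def M_def by (auto simp: PiE_def Pi_def)
  next
    fix u :: bool and y :: "'b list"
    show "dec u y \<in> {0..2^k}" unfolding dec_def dc_def decW_def
      using decg_range[OF M1] by (simp add: M_def)
  qed (simp_all add: eT_def eU_def)
  show ?thesis
    using code c12 eT_eq eU_eq unfolding BT_def BU_def by blast
qed

end
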